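(* Let $A$ be a set of vertices of the path $P_n$ with $2\le |A|\le n$. Then the output of $\textsc{Ascending Local Search}(P_n,W,A)$ is a maximizer of $W$ on $P_n$.
   Context: $P_n$ is the path on vertices $\{1,\dots,n\}$. $W(X)=\sum_{\{u,v\}\subseteq X,u\ne v}d(u,v)$ over unordered pairs, $d$ shortest-path distance; $X$ is a maximizer of $W$ if $W(X)=\max\{W(B):|B|=|X|\}$. A perturbation of $X$ in a graph $G$ is a set $(X\setminus\{u\})\cup\{v\}$ with $u\in X$, $v\in V(G)\setminus X$ and $uv\in E(G)$. $\textsc{Ascending Local Search}(G,F,A)$: set $X=A$; list all perturbations of $X$ in $G$ as $L(0),L(1),\dots$; if $F(L(i))>F(X)$ for some $i$, replace $X$ by $L(j)$ for the least such $j$ and repeat; otherwise (all perturbations satisfy $F(L(i))\le F(X)$) return $X$. *)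

theory Defs
  imports Main
begin

definition path_vertices :: "nat \<Rightarrow> nat set" where
  "path_vertices n = {1..n}"

definition path_edge :: "nat \<Rightarrow> nat \<Rightarrow> nat \<Rightarrow> bool" where
  "path_edge n u v \<longleftrightarrow> u \<in> {1..n} \<and> v \<in> {1..n} \<and> (v = u + 1 \<or> u = v + 1)"

text \<open>Shortest-path distance in P_n between vertices u, v is |u - v|.\<close>
definition path_dist :: "nat \<Rightarrow> nat \<Rightarrow> nat" where
  "path_dist u v = (if u \<le> v then v - u else u - v)"

definition W :: "nat set \<Rightarrow> nat" where
  "W X = (\<Sum>u\<in>X. \<Sum>v\<in>{v\<in>X. u < v}. path_dist u v)"

definition is_maximizer :: "nat \<Rightarrow> nat set \<Rightarrow> bool" where
  "is_maximizer n X \<longleftrightarrow> X \<subseteq> path_vertices n \<and>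
     (\<forall>B. B \<subseteq> path_vertices n \<and> card B = card X \<longrightarrow> W B \<le> W X)"

definition perturbations :: "nat \<Rightarrow> nat set \<Rightarrow> nat set set" where
  "perturbations n X = {(X - {u}) \<union> {v} | u v.
      u \<in> X \<and> v \<in> path_vertices n - X \<and> path_edge n u v}"

definition valid_listing :: "nat \<Rightarrow> (nat set \<Rightarrow> nat set list) \<Rightarrow> bool" where
  "valid_listing n L \<longleftrightarrow> (\<forall>X. distinct (L X) \<and> set (L X) = perturbations n X)"

text \<open>Ascending Local Search(P_n, F, A) with listing L: the relation
  als_returns n F L X R means that running the procedure from X returns R.\<close>
inductive als_returns ::
  "nat \<Rightarrow> (nat set \<Rightarrow> nat) \<Rightarrow> (nat set \<Rightarrow> nat set list) \<Rightarrow> nat set \<Rightarrow> nat set \<Rightarrow> bool"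
  for n F L where
  stop: "(\<forall>i < length (L X). F (L X ! i) \<le> F X) \<Longrightarrow> als_returns n F L X X"
| step: "\<lbrakk> j < length (L X); F (L X ! j) > F X;
          \<forall>i < j. F (L X ! i) \<le> F X;
          als_returns n F L (L X ! j) R \<rbrakk> \<Longrightarrow> als_returns n F L X R"

end

theory Submission imports Defs begin

definition lc :: "nat set \<Rightarrow> nat \<Rightarrow> nat" where "lc X t = card {x\<in>X. x \<le> t}"
definition rc :: "nat set \<Rightarrow> nat \<Rightarrow> nat" where "rc X t = card {x\<in>X. t < x}"

lemma lc_rc: "finite X \<Longrightarrow> lc X t + rc X t = card X"
proof -
  assume f: "finite X"
  have "X = {x\<in>X. x \<le> t} \<union> {x\<in>X. t < x}" by auto
  moreover have "{x\<in>X. x \<le> t} \<inter> {x\<in>X. t < x} = {}" by auto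
  ultimately show ?thesis unfolding lc_def rc_def using f
    by (metis (no_types, lifting) card_Un_disjoint finite_Un)
qed

lemma dist_card: "1 \<le> u \<Longrightarrow> u < v \<Longrightarrow> v \<le> n \<Longrightarrow>
   path_dist u v = (\<Sum>t\<in>{1..<n}. if u \<le> t \<and> t < v then 1 else 0)"
proof -
  assume a: "1 \<le> u" "u < v" "v \<le> n"
  have "(\<Sum>t\<in>{1..<n}. if u \<le> t \<and> t < v then 1 else (0::nat)) = card {t\<in>{1..<n}. u \<le> t \<and> t < v}"
    by (simp add: sum.If_cases Int_def)
  also have "{t\<in>{1..<n}. u \<le> t \<and> t < v} = {u..<v}" using a by auto
  finally show ?thesis using a by (simp add: path_dist_def)
qed

lemma cutW: assumes "X \<subseteq> {1..n}" shows "W X = (\<Sum>t\<in>{1..<n}. lc X t * rc X t)"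
proof -
  have f: "finite X" using assms finite_subset by blast
  have "W X = (\<Sum>u\<in>X. \<Sum>v\<in>{v\<in>X. u < v}. \<Sum>t\<in>{1..<n}. if u \<le> t \<and> t < v then 1 else 0)"
    unfolding W_def
    apply (rule sum.cong, simp)
    apply (rule sum.cong, simp)
    using assms by (intro dist_card) auto
  also have "\<dots> = (\<Sum>u\<in>X. \<Sum>t\<in>{1..<n}. \<Sum>v\<in>{v\<in>X. u < v}. if u \<le> t \<and> t < v then 1 else 0)"
    by (rule sum.cong, simp, rule sum.swap)
  also have "\<dots> = (\<Sum>t\<in>{1..<n}. \<Sum>u\<in>X. \<Sum>v\<in>{v\<in>X. u < v}. if u \<le> t \<and> t < v then 1 else 0)"
    by (rule sum.swap)
  also have "\<dots> = (\<Sum>t\<in>{1..<n}. \<Sum>u\<in>X. if u \<le> t then rc X t else 0)"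
  proof (rule sum.cong, simp, rule sum.cong, simp)
    fix t u assume "u \<in> X"
    show "(\<Sum>v\<in>{v\<in>X. u < v}. if u \<le> t \<and> t < v then 1 else 0) = (if u \<le> t then rc X t else 0)"
    proof (cases "u \<le> t")
      case True
      have "(\<Sum>v\<in>{v\<in>X. u < v}. if u \<le> t \<and> t < v then 1 else (0::nat)) = card {v\<in>{v\<in>X. u < v}. t < v}"
        using True f by (simp add: sum.If_cases Int_def)
      also have "{v\<in>{v\<in>X. u < v}. t < v} = {v\<in>X. t < v}" using True by auto
      finally show ?thesis using True by (simp add: rc_def)
    qed simp
  qed
  also have "\<dots> = (\<Sum>t\<in>{1..<n}. lc X t * rc X t)"
    using f by (simp add: sum.If_cases lc_def Int_def)
  finally show ?thesis .
qed

lemma card_swap: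
  assumes f: "finite X" and u: "u \<in> X" and v: "v \<notin> X"
  shows "card (insert v (X - {u})) = card X"
proof -
  have fin: "finite (X - {u})" using f by simp
  have nv: "v \<notin> X - {u}" using v by simp
  have "card (insert v (X - {u})) = Suc (card (X - {u}))" using card_insert_disjoint[OF fin nv] .
  moreover have "card (X - {u}) = card X - 1" using card_Diff_singleton[OF u] .
  moreover have "card X > 0" using f u card_gt_0_iff by blast
  ultimately show ?thesis by linarith
qed

lemma move:
  assumes X: "X \<subseteq> {1..n}" and u: "u \<in> X" "u+1 \<notin> X" "u+1 \<le> n"
    and Y: "Y = (X - {u}) \<union> {u+1}"
  shows "card Y = card X" "Y \<subseteq> {1..n}" "lc X u \<ge> 1"
    "\<And>t. lc Y t = (if t = u then lc X t - 1 else lc X t)"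
    "W Y + lc X u * rc X u = W X + (lc X u - 1) * (rc X u + 1)"
    "rc Y u = rc X u + 1"
proof -
  have f: "finite X" using X finite_subset by blast
  have Yi: "Y = insert (u+1) (X - {u})" using Y by auto
  show cY: "card Y = card X" unfolding Yi by (rule card_swap[OF f u(1) u(2)])
  show YV: "Y \<subseteq> {1..n}" using X Y u by auto
  show l1: "lc X u \<ge> 1"
  proof -
    have m: "u \<in> {x\<in>X. x \<le> u}" using u by simp
    have fs: "finite {x\<in>X. x \<le> u}" using f by simp
    have "card {x\<in>X. x \<le> u} > 0" using m fs card_gt_0_iff by blast
    then show ?thesis unfolding lc_def by linarith
  qed
  show lcY: "lc Y t = (if t = u then lc X t - 1 else lc X t)" for t
  proof (cases "t < u")
    case True
    then have "{x\<in>Y. x \<le> t} = {x\<in>X. x \<le> t}" using Y by auto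
    then show ?thesis using True unfolding lc_def by simp
  next
    case False
    have fs: "finite {x\<in>X. x \<le> t}" using f by simp
    have m: "u \<in> {x\<in>X. x \<le> t}" using u False by simp
    show ?thesis
    proof (cases "t = u")
      case True
      then have "{x\<in>Y. x \<le> t} = {x\<in>X. x \<le> t} - {u}" using Y by auto
      then have "lc Y t = card ({x\<in>X. x \<le> t} - {u})" unfolding lc_def by simp
      also have "\<dots> = lc X t - 1" unfolding lc_def using card_Diff_singleton[OF m] .
      finally show ?thesis using True by simp
    next
      case False2: False
      have nm: "u + 1 \<notin> {x\<in>X. x \<le> t}" using u by simp
      have "{x\<in>Y. x \<le> t} = insert (u+1) ({x\<in>X. x \<le> t} - {u})" using Y False False2 by auto
      then have "lc Y t = card (insert (u+1) ({x\<in>X. x \<le> t} - {u}))" unfolding lc_def by simp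
      also have "\<dots> = lc X t" unfolding lc_def using card_swap[OF fs m nm] .
      finally show ?thesis using False2 by simp
    qed
  qed
  have fY: "finite Y" using YV finite_subset by blast
  have rcY: "rc Y t = card X - lc Y t" for t using lc_rc[OF fY, of t] cY by simp
  have rcX: "rc X t = card X - lc X t" for t using lc_rc[OF f, of t] by simp
  have uin: "u \<in> {1..<n}" using X u by auto
  have "W Y = lc Y u * rc Y u + (\<Sum>t\<in>{1..<n} - {u}. lc Y t * rc Y t)"
    using cutW[OF YV] uin by (simp add: sum.remove)
  moreover have "W X = lc X u * rc X u + (\<Sum>t\<in>{1..<n} - {u}. lc X t * rc X t)"
    using cutW[OF X] uin by (simp add: sum.remove)
  moreover have "(\<Sum>t\<in>{1..<n} - {u}. lc Y t * rc Y t) = (\<Sum>t\<in>{1..<n} - {u}. lc X t * rc X t)"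
    by (rule sum.cong) (auto simp: rcY rcX lcY)
  moreover have "lc Y u = lc X u - 1" using lcY by simp
  moreover show "rc Y u = rc X u + 1" using rcY rcX lcY l1 lc_rc[OF f, of u] by simp
  ultimately show "W Y + lc X u * rc X u = W X + (lc X u - 1) * (rc X u + 1)" by simp
qed

definition locmax :: "nat \<Rightarrow> nat set \<Rightarrow> bool" where
  "locmax n R \<longleftrightarrow> (\<forall>Y\<in>perturbations n R. W Y \<le> W R)"

lemma lm_fwd:
  assumes R: "R \<subseteq> {1..n}" and lm: "locmax n R" and u: "u \<in> R" "u+1 \<notin> R" "u+1 \<le> n"
  shows "lc R u \<le> rc R u + 1"
proof -
  define Y where "Y = (R - {u}) \<union> {u+1}"
  have "\<exists>u' v. Y = (R - {u'}) \<union> {v} \<and> u' \<in> R \<and> v \<in> path_vertices n - R \<and> path_edge n u' v"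
    by (intro exI[of _ u] exI[of _ "u+1"]) (use R u in \<open>auto simp: Y_def path_vertices_def path_edge_def\<close>)
  then have "Y \<in> perturbations n R" unfolding perturbations_def by blast
  then have le: "W Y \<le> W R" using lm locmax_def by auto
  note m = move[OF R u Y_def]
  obtain a where a: "lc R u = Suc a" using m(3) by (metis Suc_pred less_eq_Suc_le One_nat_def)
  show ?thesis using m(5) le a by (simp add: algebra_simps)
qed

lemma lm_bwd:
  assumes R: "R \<subseteq> {1..n}" and lm: "locmax n R" and u: "1 \<le> u" "u \<notin> R" "u+1 \<in> R"
  shows "rc R u \<le> lc R u + 1"
proof -
  define Y where "Y = (R - {u+1}) \<union> {u}"
  have un: "u+1 \<le> n" using R u by auto
  have "\<exists>u' v. Y = (R - {u'}) \<union> {v} \<and> u' \<in> R \<and> v \<in> path_vertices n - R \<and> path_edge n u' v"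
    by (intro exI[of _ "u+1"] exI[of _ u]) (use R u un in \<open>auto simp: Y_def path_vertices_def path_edge_def\<close>)
  then have "Y \<in> perturbations n R" unfolding perturbations_def by blast
  then have le: "W Y \<le> W R" using lm locmax_def by auto
  have YV: "Y \<subseteq> {1..n}" using R u un unfolding Y_def by auto
  have RY: "R = (Y - {u}) \<union> {u+1}" using u unfolding Y_def by auto
  note m = move[OF YV _ _ un RY]
  have uY: "u \<in> Y" "u+1 \<notin> Y" unfolding Y_def by auto
  note m = m[OF uY]
  obtain a where a: "lc Y u = Suc a" using m(3) by (metis Suc_pred less_eq_Suc_le One_nat_def)
  have "lc R u = a" using m(4)[of u] a by simp
  then show ?thesis using m(5) m(6) le a by (simp add: algebra_simps)
qed

lemma ar1: "(b::nat) + d = a + c \<Longrightarrow> a \<le> c + 1 \<Longrightarrow> c \<le> a + 1 \<Longrightarrow> b * d \<le> a * c"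
proof -
  assume h: "b + d = a + c" "a \<le> c + 1" "c \<le> a + 1"
  have e1: "4 * int b * int d = (int b + int d)^2 - (int b - int d)^2" by (simp add: power2_eq_square algebra_simps)
  have e2: "4 * int a * int c = (int a + int c)^2 - (int a - int c)^2" by (simp add: power2_eq_square algebra_simps)
  have k: "int b + int d = int a + int c" using h(1) by linarith
  have sq: "(int a - int c)^2 \<le> (int b - int d)^2"
  proof (cases "a = c")
    case True then show ?thesis by simp
  next
    case False
    have bd: "b \<noteq> d" using h False by presburger
    have "\<bar>int a - int c\<bar> \<le> \<bar>int b - int d\<bar>" using False h bd by linarith
    then show ?thesis by (simp add: abs_le_square_iff)
  qed
  have k2: "(int b + int d)^2 = (int a + int c)^2" using k by simp
  have "4 * int b * int d \<le> 4 * int a * int c" using e1 e2 k2 sq by linarith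
  then have "int (b * d) \<le> int (a * c)" by simp
  then show ?thesis by linarith
qed

lemma ar2: "(b::nat) + d = a + c \<Longrightarrow> c \<le> a \<Longrightarrow> d \<le> c \<Longrightarrow> b * d \<le> a * c"
proof -
  assume h: "b + d = a + c" "c \<le> a" "d \<le> c"
  obtain e where e: "c = d + e" using h le_Suc_ex by blast
  have b: "b = a + e" using h e by simp
  have "e * d \<le> e * a" using h by simp
  then show ?thesis using b e by (simp add: algebra_simps)
qed

lemma termwise:
  assumes R: "R \<subseteq> {1..n}" and lm: "locmax n R" and B: "B \<subseteq> {1..n}" and cB: "card B = card R"
    and t: "t \<in> {1..<n}"
  shows "lc B t * rc B t \<le> lc R t * rc R t"
proof -
  have fR: "finite R" using R finite_subset by blast
  have fB: "finite B" using B finite_subset by blast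
  have sum: "lc B t + rc B t = lc R t + rc R t" using lc_rc[OF fR] lc_rc[OF fB] cB by simp
  consider "lc R t \<le> rc R t + 1 \<and> rc R t \<le> lc R t + 1" | "lc R t > rc R t + 1" | "rc R t > lc R t + 1"
    by linarith
  then show ?thesis
  proof cases
    case 1
    then show ?thesis using ar1[OF sum] by simp
  next
    case 2
    have sub: "{t<..n} \<subseteq> R"
    proof
      fix s assume s: "s \<in> {t<..n}"
      show "s \<in> R"
      proof (rule ccontr)
        assume sR: "s \<notin> R"
        define S where "S = {x\<in>R. x < s}"
        have "lc R t > 0" using 2 by simp
        then obtain x where x: "x \<in> R" "x \<le> t" unfolding lc_def
          by (metis (mono_tags, lifting) card.empty less_irrefl mem_Collect_eq subsetI subset_empty)
        have fS: "finite S" "S \<noteq> {}" using fR x s unfolding S_def by auto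
        define u where "u = Max S"
        have uS: "u \<in> S" using fS Max_in u_def by blast
        have umax: "\<And>y. y \<in> S \<Longrightarrow> y \<le> u" using fS u_def by simp
        have u1: "u \<in> R" "u < s" using uS S_def by auto
        have u2: "u+1 \<notin> R"
        proof
          assume h: "u+1 \<in> R"
          then have "u + 1 = s \<or> u + 1 \<in> S" using u1 S_def by auto
          then show False using sR umax h by fastforce
        qed
        have u3: "u+1 \<le> n" using u1 s by auto
        have "lc R u \<le> rc R u + 1" using lm_fwd[OF R lm u1(1) u2 u3] .
        moreover have "lc R t \<le> lc R u" unfolding lc_def
          by (rule card_mono) (use fR umax s S_def in auto)
        moreover have "rc R u \<le> rc R t" unfolding rc_def
        proof (rule card_mono)
          show "finite {x \<in> R. t < x}" using fR by simp
          show "{x \<in> R. u < x} \<subseteq> {x \<in> R. t < x}"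
          proof
            fix y assume y: "y \<in> {x \<in> R. u < x}"
            have "y \<ge> s"
            proof (rule ccontr)
              assume "\<not> s \<le> y" then have "y \<in> S" using y S_def by auto
              then show False using umax y by fastforce
            qed
            then show "y \<in> {x \<in> R. t < x}" using y s by auto
          qed
        qed
        ultimately show False using 2 by linarith
      qed
    qed
    have "{x\<in>R. t < x} = {t<..n}" using sub R by auto
    then have c: "rc R t = n - t" unfolding rc_def by simp
    have "{x\<in>B. t < x} \<subseteq> {t<..n}" using B by auto
    then have "rc B t \<le> n - t" unfolding rc_def by (metis card_greaterThanAtMost card_mono finite_greaterThanAtMost)
    then show ?thesis using ar2[OF sum] c 2 by simp
  next
    case 3
    have sub: "{1..t} \<subseteq> R"
    proof
      fix s assume s: "s \<in> {1..t}"
      show "s \<in> R"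
      proof (rule ccontr)
        assume sR: "s \<notin> R"
        define S where "S = {x\<in>R. s < x}"
        have "rc R t > 0" using 3 by simp
        then obtain x where x: "x \<in> R" "t < x" unfolding rc_def
          by (metis (mono_tags, lifting) card.empty less_irrefl mem_Collect_eq subsetI subset_empty)
        have fS: "finite S" "S \<noteq> {}" using fR x s unfolding S_def by auto
        define v where "v = Min S"
        have vS: "v \<in> S" using fS Min_in v_def by blast
        have vmin: "\<And>y. y \<in> S \<Longrightarrow> v \<le> y" using fS v_def by simp
        define u where "u = v - 1"
        have v1: "v \<in> R" "s < v" using vS S_def by auto
        have uv: "u + 1 = v" "s \<le> u" using v1 u_def by auto
        have u1: "1 \<le> u" using uv s by auto
        have u2: "u \<notin> R"
        proof
          assume h: "u \<in> R"
          then have "u = s \<or> u \<in> S" using uv S_def by auto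
          then show False using sR vmin uv h by fastforce
        qed
        have "rc R u \<le> lc R u + 1" using lm_bwd[OF R lm u1 u2] v1 uv by simp
        moreover have "rc R t \<le> rc R u" unfolding rc_def
        proof (rule card_mono)
          show "finite {x \<in> R. u < x}" using fR by simp
          show "{x \<in> R. t < x} \<subseteq> {x \<in> R. u < x}"
          proof
            fix y assume y: "y \<in> {x \<in> R. t < x}"
            then have "y \<in> S" using s S_def by auto
            then have "v \<le> y" using vmin by blast
            then show "y \<in> {x \<in> R. u < x}" using y uv by auto
          qed
        qed
        moreover have "lc R u \<le> lc R t" unfolding lc_def
        proof (rule card_mono)
          show "finite {x \<in> R. x \<le> t}" using fR by simp
          show "{x \<in> R. x \<le> u} \<subseteq> {x \<in> R. x \<le> t}"
          proof
            fix y assume y: "y \<in> {x \<in> R. x \<le> u}"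
            have "y \<le> s"
            proof (rule ccontr)
              assume "\<not> y \<le> s" then have "y \<in> S" using y S_def by auto
              then show False using vmin y uv by fastforce
            qed
            then show "y \<in> {x \<in> R. x \<le> t}" using y s by auto
          qed
        qed
        ultimately show False using 3 by linarith
      qed
    qed
    have "{x\<in>R. x \<le> t} = {1..t}" using sub R by auto
    then have c: "lc R t = t" unfolding lc_def by simp
    have "{x\<in>B. x \<le> t} \<subseteq> {1..t}" using B by auto
    then have "lc B t \<le> t" unfolding lc_def by (metis card_atLeastAtMost card_mono finite_atLeastAtMost diff_Suc_1)
    moreover have "rc B t + lc B t = rc R t + lc R t" using sum by linarith
    moreover have "lc R t \<le> rc R t" using 3 by linarith
    ultimately have "rc B t * lc B t \<le> rc R t * lc R t" using ar2[of "rc B t" "lc B t" "rc R t" "lc R t"] c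
      by linarith
    then show ?thesis by (simp only: mult.commute)
  qed
qed

lemma locmax_maximizer:
  assumes R: "R \<subseteq> {1..n}" and lm: "locmax n R"
  shows "is_maximizer n R"
  unfolding is_maximizer_def path_vertices_def
proof (intro conjI allI impI)
  show "R \<subseteq> {1..n}" by (rule R)
  fix B assume B: "B \<subseteq> {1..n} \<and> card B = card R"
  have "W B = (\<Sum>t\<in>{1..<n}. lc B t * rc B t)" using cutW B by blast
  also have "\<dots> \<le> (\<Sum>t\<in>{1..<n}. lc R t * rc R t)"
    by (rule sum_mono) (use termwise[OF R lm] B in blast)
  also have "\<dots> = W R" using cutW[OF R] by simp
  finally show "W B \<le> W R" .
qed

lemma pert_props:
  assumes X: "X \<subseteq> {1..n}" and P: "P \<in> perturbations n X"
  shows "P \<subseteq> {1..n}" "card P = card X"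
proof -
  obtain u v where uv: "P = (X - {u}) \<union> {v}" "u \<in> X" "v \<in> path_vertices n - X"
    using P unfolding perturbations_def by blast
  have f: "finite X" using X finite_subset by blast
  show "P \<subseteq> {1..n}" using uv X by (auto simp: path_vertices_def)
  have Pi: "P = insert v (X - {u})" using uv by auto
  have "v \<notin> X" using uv by simp
  then show "card P = card X" unfolding Pi using card_swap[OF f uv(2)] by blast
qed

lemma als_props:
  assumes vl: "valid_listing n L"
  shows "als_returns n W L X R \<Longrightarrow> X \<subseteq> {1..n} \<Longrightarrow> R \<subseteq> {1..n} \<and> card R = card X \<and> locmax n R"
proof (induction rule: als_returns.induct)
  case (stop Z)
  have "\<forall>Y\<in>perturbations n Z. W Y \<le> W Z"
  proof
    fix Y assume "Y \<in> perturbations n Z"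
    then have "Y \<in> set (L Z)" using vl unfolding valid_listing_def by blast
    then obtain i where "i < length (L Z)" "L Z ! i = Y" by (metis in_set_conv_nth)
    then show "W Y \<le> W Z" using stop.hyps by blast
  qed
  then show ?case using stop.prems unfolding locmax_def by blast
next
  case (step j Z Q)
  have "L Z ! j \<in> set (L Z)" using step.hyps(1) by (rule nth_mem)
  then have mem: "L Z ! j \<in> perturbations n Z" using vl unfolding valid_listing_def by blast
  have s1: "L Z ! j \<subseteq> {1..n}" using pert_props(1)[OF step.prems mem] .
  have c1: "card (L Z ! j) = card Z" using pert_props(2)[OF step.prems mem] .
  have r: "Q \<subseteq> {1..n} \<and> card Q = card (L Z ! j) \<and> locmax n Q" using step.IH s1 by blast
  then show ?case using c1 by simp
qed

lemma W_bound: assumes "X \<subseteq> {1..n}" shows "W X \<le> n * (n * n)"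
proof -
  have f: "finite X" using assms finite_subset by blast
  have "W X = (\<Sum>t\<in>{1..<n}. lc X t * rc X t)" using cutW[OF assms] .
  also have "\<dots> \<le> (\<Sum>t\<in>{1..<n}. n * n)"
  proof (rule sum_mono)
    fix t
    have "lc X t \<le> card X" "rc X t \<le> card X" using lc_rc[OF f, of t] by auto
    moreover have "card X \<le> n" using card_mono[OF _ assms] by simp
    ultimately show "lc X t * rc X t \<le> n * n" by (meson le_trans mult_le_mono)
  qed
  also have "\<dots> \<le> n * (n * n)" by simp
  finally show ?thesis .
qed

lemma als_exists_aux:
  assumes vl: "valid_listing n L"
  shows "\<forall>X. X \<subseteq> {1..n} \<longrightarrow> n * (n * n) - W X = m \<longrightarrow> (\<exists>R. als_returns n W L X R)"
proof (induction m rule: less_induct)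
  case (less m)
  show ?case
  proof (intro allI impI)
    fix X assume X: "X \<subseteq> {1..n}" and m: "n * (n * n) - W X = m"
    show "\<exists>R. als_returns n W L X R"
    proof (cases "\<forall>i < length (L X). W (L X ! i) \<le> W X")
      case True
      then have "als_returns n W L X X" by (rule als_returns.stop)
      then show ?thesis by blast
    next
      case False
      define P where "P = (\<lambda>i. i < length (L X) \<and> W X < W (L X ! i))"
      have ex: "\<exists>i. P i" using False P_def by auto
      define j where "j = (LEAST i. P i)"
      have Pj: "P j" using LeastI_ex[OF ex] j_def by simp
      have j1: "j < length (L X)" and j2: "W X < W (L X ! j)" using Pj P_def by auto
      have before: "\<forall>i<j. W (L X ! i) \<le> W X"
      proof (intro allI impI)
        fix i assume "i < j"
        then have "\<not> P i" using not_less_Least j_def by blast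
        moreover have "i < length (L X)" using \<open>i < j\<close> j1 by auto
        ultimately show "W (L X ! i) \<le> W X" using P_def by auto
      qed
      have "L X ! j \<in> set (L X)" using j1 by simp
      then have mem: "L X ! j \<in> perturbations n X" using vl unfolding valid_listing_def by blast
      have sub: "L X ! j \<subseteq> {1..n}" using pert_props(1)[OF X mem] .
      have bnd: "W (L X ! j) \<le> n * (n * n)" using W_bound[OF sub] .
      have lt: "n * (n * n) - W (L X ! j) < m" using bnd j2 m by linarith
      have "\<forall>Y. Y \<subseteq> {1..n} \<longrightarrow> n * (n * n) - W Y = n * (n * n) - W (L X ! j) \<longrightarrow> (\<exists>R. als_returns n W L Y R)"
        using less.IH[OF lt] .
      then obtain R where R: "als_returns n W L (L X ! j) R" using sub by blast
      have "als_returns n W L X R" using als_returns.step[OF j1 j2 before R] .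
      then show ?thesis by blast
    qed
  qed
qed

lemma als_exists:
  assumes vl: "valid_listing n L" and X: "X \<subseteq> {1..n}"
  shows "\<exists>R. als_returns n W L X R"
  using als_exists_aux[OF vl] X by blast

theorem mainTheorem12:
  fixes n :: nat and A :: "nat set" and L :: "nat set \<Rightarrow> nat set list"
  assumes "A \<subseteq> path_vertices n"
    and "2 \<le> card A" and "card A \<le> n"
    and "valid_listing n L"
  shows "(\<exists>R. als_returns n W L A R) \<and>
         (\<forall>R. als_returns n W L A R \<longrightarrow> is_maximizer n R)"
proof
  have A: "A \<subseteq> {1..n}" using assms(1) path_vertices_def by simp
  show "\<exists>R. als_returns n W L A R" using als_exists[OF assms(4) A] .
  show "\<forall>R. als_returns n W L A R \<longrightarrow> is_maximizer n R"
    using als_props[OF assms(4) _ A] locmax_maximizer by blast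
qed

end
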